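(* For every block graph $G$, $\operatorname{cobox}(G)\le \operatorname{cothdim}(G)\le 2\operatorname{cobox}(G)$.
   Context: All graphs are finite and simple. A block is a maximal connected subgraph with no cut-vertex of its own; a block graph is a graph whose blocks are all complete. The co-boxicity $\operatorname{cobox}(G)$ is the boxicity of the complement of $G$; equivalently, the minimum number of co-interval subgraphs of $G$ whose edge sets have union $E(G)$, where a graph is co-interval if its vertices can be assigned closed real intervals such that two vertices are adjacent iff their intervals are disjoint. A threshold graph is a graph obtainable from a single vertex by repeatedly adding an isolated or a universal vertex. The threshold co-dimension $\operatorname{cothdim}(G)$ is the minimum number of threshold subgraphs of $G$ whose edge sets have union $E(G)$. *)

theory Defs
  imports Main "HOL-Library.Disjoint_Sets" Complex_Main
begin

definition graph :: "'a set \<Rightarrow> 'a set set \<Rightarrow> bool" where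
  "graph V E \<longleftrightarrow> finite V \<and> (\<forall>e\<in>E. \<exists>u v. u \<in> V \<and> v \<in> V \<and> u \<noteq> v \<and> e = {u, v})"

definition subgraph :: "'a set \<Rightarrow> 'a set set \<Rightarrow> 'a set \<Rightarrow> 'a set set \<Rightarrow> bool" where
  "subgraph W F V E \<longleftrightarrow> W \<subseteq> V \<and> F \<subseteq> E \<and> (\<forall>e\<in>F. e \<subseteq> W)"

definition reach :: "'a set \<Rightarrow> 'a set set \<Rightarrow> 'a \<Rightarrow> 'a \<Rightarrow> bool" where
  "reach W F x y \<longleftrightarrow> (\<lambda>a b. a \<in> W \<and> b \<in> W \<and> {a, b} \<in> F)\<^sup>*\<^sup>* x y"

definition connected_graph :: "'a set \<Rightarrow> 'a set set \<Rightarrow> bool" where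
  "connected_graph W F \<longleftrightarrow> W \<noteq> {} \<and> (\<forall>x\<in>W. \<forall>y\<in>W. reach W F x y)"

text \<open>v is a cut-vertex of (W, F) iff deleting v increases the number of components,
  i.e. some two other vertices connected in (W, F) become disconnected.\<close>
definition cut_vertex :: "'a set \<Rightarrow> 'a set set \<Rightarrow> 'a \<Rightarrow> bool" where
  "cut_vertex W F v \<longleftrightarrow> v \<in> W \<and>
     (\<exists>x\<in>W - {v}. \<exists>y\<in>W - {v}. reach W F x y \<and> \<not> reach (W - {v}) {e\<in>F. v \<notin> e} x y)"

definition nonsep :: "'a set \<Rightarrow> 'a set set \<Rightarrow> bool" where
  "nonsep W F \<longleftrightarrow> connected_graph W F \<and> (\<forall>v. \<not> cut_vertex W F v)"

definition block :: "'a set \<Rightarrow> 'a set set \<Rightarrow> 'a set \<Rightarrow> 'a set set \<Rightarrow> bool" where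
  "block V E W F \<longleftrightarrow> subgraph W F V E \<and> nonsep W F \<and>
     (\<forall>W' F'. subgraph W' F' V E \<and> nonsep W' F' \<and> W \<subseteq> W' \<and> F \<subseteq> F'
        \<longrightarrow> W' = W \<and> F' = F)"

definition complete_graph :: "'a set \<Rightarrow> 'a set set \<Rightarrow> bool" where
  "complete_graph W F \<longleftrightarrow> F = {{u, v} | u v. u \<in> W \<and> v \<in> W \<and> u \<noteq> v}"

definition block_graph :: "'a set \<Rightarrow> 'a set set \<Rightarrow> bool" where
  "block_graph V E \<longleftrightarrow> graph V E \<and> (\<forall>W F. block V E W F \<longrightarrow> complete_graph W F)"

definition cointerval :: "'a set \<Rightarrow> 'a set set \<Rightarrow> bool" where
  "cointerval W F \<longleftrightarrow> (\<exists>l r :: 'a \<Rightarrow> real. (\<forall>v\<in>W. l v \<le> r v) \<and>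
     (\<forall>u\<in>W. \<forall>v\<in>W. u \<noteq> v \<longrightarrow> ({u, v} \<in> F \<longleftrightarrow> {l u..r u} \<inter> {l v..r v} = {})))"

inductive threshold :: "'a set \<Rightarrow> 'a set set \<Rightarrow> bool" where
  single: "threshold {v} {}"
| isolated: "threshold W F \<Longrightarrow> v \<notin> W \<Longrightarrow> threshold (insert v W) F"
| universal: "threshold W F \<Longrightarrow> v \<notin> W \<Longrightarrow> threshold (insert v W) (F \<union> {{v, u} | u. u \<in> W})"

definition cobox :: "'a set \<Rightarrow> 'a set set \<Rightarrow> nat" where
  "cobox V E = (LEAST k. \<exists>HV HE. (\<forall>i<k. subgraph (HV i) (HE i) V E \<and> cointerval (HV i) (HE i))
                                  \<and> (\<Union>i<k. HE i) = E)"

definition cothdim :: "'a set \<Rightarrow> 'a set set \<Rightarrow> nat" where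
  "cothdim V E = (LEAST k. \<exists>HV HE. (\<forall>i<k. subgraph (HV i) (HE i) V E \<and> threshold (HV i) (HE i))
                                  \<and> (\<Union>i<k. HE i) = E)"

end

theory Submission
  imports Defs
begin

lemma reach_refl: "reach W F x x" by (simp add: reach_def)

lemma reach_edge: "a \<in> W \<Longrightarrow> b \<in> W \<Longrightarrow> {a,b} \<in> F \<Longrightarrow> reach W F a b"
  unfolding reach_def by (rule r_into_rtranclp) simp

lemma reach_trans: "reach W F a b \<Longrightarrow> reach W F b c \<Longrightarrow> reach W F a c"
  unfolding reach_def by (rule rtranclp_trans)

lemma reach_sym: "reach W F a b \<Longrightarrow> reach W F b a"
proof -
  let ?R = "\<lambda>a b. a \<in> W \<and> b \<in> W \<and> {a, b} \<in> F"
  have eq: "?R\<inverse>\<inverse> = ?R" by (auto simp: fun_eq_iff insert_commute)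
  assume "reach W F a b"
  then have "?R\<^sup>*\<^sup>* a b" by (simp add: reach_def)
  then have "(?R\<inverse>\<inverse>)\<^sup>*\<^sup>* b a" by (rule rtranclp_converseI)
  then show ?thesis unfolding reach_def eq .
qed

lemma path3:
  assumes "p \<in> W" "q \<in> W" "s \<in> W" "{p,q} \<in> F" "{q,s} \<in> F" "u \<in> {p,q,s}" "w \<in> {p,q,s}"
  shows "reach W F u w"
proof -
  have pq: "reach W F p q" and qs: "reach W F q s" using assms by (auto intro: reach_edge)
  have qp: "reach W F q p" and sq: "reach W F s q" using pq qs by (simp_all add: reach_sym)
  have ps: "reach W F p s" using pq qs by (rule reach_trans)
  have sp: "reach W F s p" using sq qp by (rule reach_trans)
  show ?thesis using assms(6,7) by (elim insertE emptyE) (simp_all add: pq qs qp sq ps sp reach_refl)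
qed

section \<open>4-cycles in block graphs\<close>

lemma C4_nonsep:
  assumes d: "a \<noteq> b" "a \<noteq> c" "a \<noteq> d" "b \<noteq> c" "b \<noteq> d" "c \<noteq> d"
  shows "nonsep {a,b,c,d} {{a,b},{b,c},{c,d},{d,a}}"
proof -
  let ?W = "{a,b,c,d}" and ?F = "{{a,b},{b,c},{c,d},{d,a}}"
  have r1: "reach ?W ?F u a" if "u \<in> {a,b,c}" for u
    by (rule path3[of a _ b c]) (use that in simp_all)
  have toa: "reach ?W ?F u a" if "u \<in> ?W" for u
  proof (cases "u = d")
    case True
    then show ?thesis by (auto intro: reach_edge)
  qed (use that r1 in simp)
  have conn: "connected_graph ?W ?F"
    unfolding connected_graph_def using toa by (meson reach_trans reach_sym insert_not_empty)
  have ncut: "\<not> cut_vertex ?W ?F v" for v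
  proof -
    have "reach (?W - {v}) {e \<in> ?F. v \<notin> e} x y" if "v \<in> ?W" "x \<in> ?W - {v}" "y \<in> ?W - {v}" for x y
    proof -
      from that(1) consider "v = a" | "v = b" | "v = c" | "v = d" by auto
      then show ?thesis
      proof cases
        case 1
        then show ?thesis by (intro path3[of b _ c d]) (insert that d, simp_all, (blast+)?)
      next
        case 2
        then show ?thesis by (intro path3[of c _ d a]) (insert that d, simp_all, (blast+)?)
      next
        case 3
        then show ?thesis by (intro path3[of b _ a d]) (insert that d, simp_all, (blast+)?)
      next
        case 4
        then show ?thesis by (intro path3[of a _ b c]) (insert that d, simp_all, (blast+)?)
      qed
    qed
    then show ?thesis unfolding cut_vertex_def by blast
  qed
  show ?thesis unfolding nonsep_def using conn ncut by blast
qed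


lemma graph_finE: "graph V E \<Longrightarrow> finite E"
proof -
  assume g: "graph V E"
  have "E \<subseteq> Pow V"
  proof
    fix e assume "e \<in> E"
    then obtain u v where "u \<in> V" "v \<in> V" "e = {u,v}" using g unfolding graph_def by blast
    then show "e \<in> Pow V" by simp
  qed
  moreover have "finite (Pow V)" using g unfolding graph_def by simp
  ultimately show ?thesis by (rule finite_subset)
qed

lemma C4_chord:
  assumes g: "graph V E" and bg: "block_graph V E"
    and v: "a \<in> V" "b \<in> V" "c \<in> V" "d \<in> V"
    and d: "a \<noteq> b" "a \<noteq> c" "a \<noteq> d" "b \<noteq> c" "b \<noteq> d" "c \<noteq> d"
    and e: "{a,b} \<in> E" "{b,c} \<in> E" "{c,d} \<in> E" "{d,a} \<in> E"
  shows "{a,c} \<in> E"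
proof -
  define W0 where "W0 = {a,b,c,d}"
  define F0 where "F0 = {{a,b},{b,c},{c,d},{d,a}}"
  have finV: "finite V" using g unfolding graph_def by blast
  have finE: "finite E" using g by (rule graph_finE)
  define Cands where "Cands = {(W',F'). subgraph W' F' V E \<and> nonsep W' F' \<and> W0 \<subseteq> W' \<and> F0 \<subseteq> F'}"
  have Cin: "(X, Y) \<in> Cands \<longleftrightarrow> subgraph X Y V E \<and> nonsep X Y \<and> W0 \<subseteq> X \<and> F0 \<subseteq> Y" for X Y
    unfolding Cands_def by simp
  have "Cands \<subseteq> Pow V \<times> Pow E" unfolding Cands_def subgraph_def by blast
  then have finC: "finite Cands" by (rule finite_subset) (use finV finE in simp)
  have inC: "(W0, F0) \<in> Cands"
  proof -
    have "subgraph W0 F0 V E" unfolding subgraph_def W0_def F0_def using v e by simp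
    moreover have "nonsep W0 F0" unfolding W0_def F0_def by (rule C4_nonsep[OF d])
    ultimately show ?thesis unfolding Cin by simp
  qed
  define g' where "g' = (\<lambda>(W'::'a set, F'::'a set set). card W' + card F')"
  define m where "m = Max (g' ` Cands)"
  have "m \<in> g' ` Cands" unfolding m_def using finC inC by (metis Max_in empty_iff finite_imageI image_eqI)
  then obtain W1 F1 where p: "(W1, F1) \<in> Cands" and gm: "g' (W1, F1) = m" by auto
  have maxp: "g' q \<le> m" if "q \<in> Cands" for q
    unfolding m_def using finC that by (metis Max_ge finite_imageI image_eqI)
  have blk: "block V E W1 F1"
    unfolding block_def
  proof (intro conjI allI impI)
    show "subgraph W1 F1 V E" "nonsep W1 F1" using p unfolding Cin by simp_all
    fix W' F' assume h: "subgraph W' F' V E \<and> nonsep W' F' \<and> W1 \<subseteq> W' \<and> F1 \<subseteq> F'"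
    then have q: "(W', F') \<in> Cands" using p unfolding Cin by blast
    have fW: "finite W'" using h finV unfolding subgraph_def by (meson rev_finite_subset)
    have fF: "finite F'" using h finE unfolding subgraph_def by (meson rev_finite_subset)
    have c1: "card W1 \<le> card W'" using h fW by (simp add: card_mono)
    have c2: "card F1 \<le> card F'" using h fF by (simp add: card_mono)
    have "card W' + card F' \<le> card W1 + card F1" using maxp[OF q] gm unfolding g'_def by simp
    then have "card W1 = card W'" "card F1 = card F'" using c1 c2 by auto
    then show "W' = W1" "F' = F1" using h fW fF by (metis card_subset_eq)+
  qed
  then have "complete_graph W1 F1" using bg unfolding block_graph_def by (elim conjE allE impE)
  moreover have "a \<in> W1" "c \<in> W1" using p unfolding Cin W0_def by simp_all
  ultimately have "{a,c} \<in> F1" unfolding complete_graph_def using d(2) by blast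
  moreover have "F1 \<subseteq> E" using p unfolding Cin subgraph_def by simp
  ultimately show ?thesis by blast
qed


section \<open>Threshold graphs\<close>

lemma thr_props: "threshold W F \<Longrightarrow> finite W \<and> W \<noteq> {} \<and> (\<forall>e\<in>F. e \<subseteq> W)"
  by (induction rule: threshold.induct) auto

lemma thr_cointerval: "threshold W F \<Longrightarrow> cointerval W F"
proof (induction rule: threshold.induct)
  case (single v)
  show ?case unfolding cointerval_def by (rule exI[of _ "\<lambda>_. 0"], rule exI[of _ "\<lambda>_. 0"]) simp
next
  case (isolated W F v)
  let ?F = F
  from isolated.IH obtain l r :: "'a \<Rightarrow> real" where lr: "\<forall>v\<in>W. l v \<le> r v"
    and adj: "\<forall>u\<in>W. \<forall>w\<in>W. u \<noteq> w \<longrightarrow> ({u, w} \<in> F \<longleftrightarrow> {l u..r u} \<inter> {l w..r w} = {})"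
    unfolding cointerval_def by blast
  have pr: "finite W" "W \<noteq> {}" "\<forall>e\<in>F. e \<subseteq> W" using thr_props[OF isolated.hyps(1)] by auto
  define L where "L = Min (l ` W)"
  define R where "R = Max (r ` W)"
  have LR: "L \<le> l w" "r w \<le> R" if "w \<in> W" for w
    unfolding L_def R_def using pr that by auto
  have LleR: "L \<le> R"
  proof -
    obtain x where x: "x \<in> W" using pr(2) by blast
    show ?thesis using LR[OF x] lr x by force
  qed
  define l' where "l' = l(v := L)"
  define r' where "r' = r(v := R)"
  have nv: "{v, w} \<notin> F" "{w, v} \<notin> F" for w using pr(3) isolated.hyps(2) by auto
  have A: "\<forall>u\<in>insert v W. l' u \<le> r' u"
  proof
    fix u assume "u \<in> insert v W"
    then show "l' u \<le> r' u" unfolding l'_def r'_def using lr LleR isolated.hyps(2)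
      by (cases "u = v") auto
  qed
  have B: "\<forall>u\<in>insert v W. \<forall>w\<in>insert v W. u \<noteq> w \<longrightarrow> ({u, w} \<in> ?F) = ({l' u..r' u} \<inter> {l' w..r' w} = {})"
  proof (intro ballI impI)
    fix u w assume u: "u \<in> insert v W" and w: "w \<in> insert v W" and uw: "u \<noteq> w"
    show "({u, w} \<in> F) = ({l' u..r' u} \<inter> {l' w..r' w} = {})"
    proof (cases "u = v")
      case True
      then have "w \<in> W" using w uw by auto
      then have "l w \<in> {l' u..r' u} \<inter> {l' w..r' w}"
        unfolding l'_def r'_def using True LR lr isolated.hyps(2) by (auto intro: order_trans)
      then show ?thesis using nv True by blast
    next
      case False
      note F = False
      show ?thesis
      proof (cases "w = v")
        case True
        then have "u \<in> W" using u uw by auto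
        then have "l u \<in> {l' u..r' u} \<inter> {l' w..r' w}"
          unfolding l'_def r'_def using True LR lr isolated.hyps(2) by (auto intro: order_trans)
        then show ?thesis using nv True by blast
      next
        case False
        then have "u \<in> W" "w \<in> W" using u w F by auto
        then show ?thesis using adj uw False F unfolding l'_def r'_def by simp
      qed
    qed
  qed
  show ?case unfolding cointerval_def using A B by blast
next
  case (universal W F v)
  let ?F = "F \<union> {{v, u} |u. u \<in> W}"
  from universal.IH obtain l r :: "'a \<Rightarrow> real" where lr: "\<forall>v\<in>W. l v \<le> r v"
    and adj: "\<forall>u\<in>W. \<forall>w\<in>W. u \<noteq> w \<longrightarrow> ({u, w} \<in> F \<longleftrightarrow> {l u..r u} \<inter> {l w..r w} = {})"
    unfolding cointerval_def by blast
  have pr: "finite W" "W \<noteq> {}" "\<forall>e\<in>F. e \<subseteq> W" using thr_props[OF universal.hyps(1)] by auto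
  define R where "R = Max (r ` W)"
  have LR: "r w \<le> R" if "w \<in> W" for w
    unfolding R_def using pr that by auto
  define l' where "l' = l(v := R + 1)"
  define r' where "r' = r(v := R + 1)"
  have inE: "{v, w} \<in> F \<union> {{v, u} |u. u \<in> W}" "{w, v} \<in> F \<union> {{v, u} |u. u \<in> W}"
    if "w \<in> W" for w using that by (auto simp: insert_commute)
  have notE: "{u, w} \<in> F \<union> {{v, u} |u. u \<in> W} \<longleftrightarrow> {u, w} \<in> F" if "u \<in> W" "w \<in> W" for u w
    using that universal.hyps(2) by (auto simp: doubleton_eq_iff)
  have A: "\<forall>u\<in>insert v W. l' u \<le> r' u"
  proof
    fix u assume "u \<in> insert v W"
    then show "l' u \<le> r' u" unfolding l'_def r'_def using lr universal.hyps(2)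
      by (cases "u = v") auto
  qed
  have B: "\<forall>u\<in>insert v W. \<forall>w\<in>insert v W. u \<noteq> w \<longrightarrow> ({u, w} \<in> ?F) = ({l' u..r' u} \<inter> {l' w..r' w} = {})"
  proof (intro ballI impI)
    fix u w assume u: "u \<in> insert v W" and w: "w \<in> insert v W" and uw: "u \<noteq> w"
    show "({u, w} \<in> F \<union> {{v, u} |u. u \<in> W}) = ({l' u..r' u} \<inter> {l' w..r' w} = {})"
    proof (cases "u = v")
      case True
      then have ww: "w \<in> W" using w uw by auto
      then have "{l' u..r' u} \<inter> {l' w..r' w} = {}"
        unfolding l'_def r'_def using True LR[OF ww] universal.hyps(2) by auto
      then show ?thesis using inE[OF ww] True by blast
    next
      case False
      note F = False
      show ?thesis
      proof (cases "w = v")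
        case True
        then have uu: "u \<in> W" using u uw by auto
        then have "{l' u..r' u} \<inter> {l' w..r' w} = {}"
          unfolding l'_def r'_def using True LR[OF uu] universal.hyps(2) by auto
        then show ?thesis using inE[OF uu] True by blast
      next
        case False
        then have uw': "u \<in> W" "w \<in> W" using u w F by auto
        then show ?thesis using adj uw False F notE[OF uw'] unfolding l'_def r'_def by simp
      qed
    qed
  qed
  show ?case unfolding cointerval_def using A B by blast
qed

lemma thr_add_iso: "finite D \<Longrightarrow> threshold W F \<Longrightarrow> threshold (W \<union> D) F"
proof (induction D rule: finite_induct)
  case empty
  then show ?case by simp
next
  case (insert x D)
  then have t: "threshold (W \<union> D) F" by blast
  show ?case
  proof (cases "x \<in> W \<union> D")
    case True
    then have "W \<union> insert x D = W \<union> D" by blast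
    then show ?thesis using t by simp
  next
    case False
    have "threshold (insert x (W \<union> D)) F" by (rule threshold.isolated[OF t False])
    then show ?thesis by simp
  qed
qed

lemma thr_extend:
  assumes "threshold W0 F0" "finite D" "c \<notin> W0 \<union> D"
  shows "threshold (insert c (W0 \<union> D)) (F0 \<union> {{c, u} |u. u \<in> W0 \<union> D})"
  by (rule threshold.universal[OF thr_add_iso[OF assms(2,1)] assms(3)])

definition Kc :: "'a set \<Rightarrow> 'a set set" where
  "Kc C = {{u, v} |u v. u \<in> C \<and> v \<in> C \<and> u \<noteq> v}"

lemma thr_clique: "finite C \<Longrightarrow> C \<noteq> {} \<Longrightarrow> threshold C (Kc C)"
proof (induction C rule: finite_ne_induct)
  case (singleton x)
  have "Kc {x} = {}" unfolding Kc_def by auto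
  then show ?case using threshold.single by metis
next
  case (insert x C)
  have "threshold (insert x C) (Kc C \<union> {{x, u} |u. u \<in> C})"
    by (rule threshold.universal[OF insert.IH insert.hyps(3)])
  moreover have "Kc C \<union> {{x, u} |u. u \<in> C} = Kc (insert x C)"
    unfolding Kc_def using insert.hyps(3) by blast
  ultimately show ?case by simp
qed


section \<open>Covering a co-interval subgraph by two threshold subgraphs\<close>

lemma cover2:
  assumes g: "graph V E" and bg: "block_graph V E"
    and sub: "subgraph W F V E" and ci: "cointerval W F" and w0: "w0 \<in> V"
  shows "\<exists>T :: bool \<Rightarrow> 'a set \<times> 'a set set.
           (\<forall>b. subgraph (fst (T b)) (snd (T b)) V E \<and> threshold (fst (T b)) (snd (T b)))
           \<and> F \<subseteq> snd (T True) \<union> snd (T False)"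
proof (cases "F = {}")
  case True
  have "subgraph {w0} {} V E" unfolding subgraph_def using w0 by simp
  then show ?thesis using True threshold.single[of w0]
    by (intro exI[of _ "\<lambda>_. ({w0}, {})"]) simp
next
  case False
  from ci obtain l r :: "'a \<Rightarrow> real" where lr: "\<forall>v\<in>W. l v \<le> r v"
    and adj: "\<forall>u\<in>W. \<forall>w\<in>W. u \<noteq> w \<longrightarrow> ({u, w} \<in> F \<longleftrightarrow> {l u..r u} \<inter> {l w..r w} = {})"
    unfolding cointerval_def by blast
  have finV: "finite V" using g unfolding graph_def by blast
  have WV: "W \<subseteq> V" and FE: "F \<subseteq> E" and FW: "\<forall>e\<in>F. e \<subseteq> W"
    using sub unfolding subgraph_def by auto
  have finW: "finite W" using finV WV by (rule rev_finite_subset)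
  have edge: "\<exists>u v. e = {u, v} \<and> u \<in> W \<and> v \<in> W \<and> r u < l v" if "e \<in> F" for e
  proof -
    have eE: "e \<in> E" using FE that by blast
    have gE: "\<forall>e\<in>E. \<exists>u v. u \<in> V \<and> v \<in> V \<and> u \<noteq> v \<and> e = {u, v}"
      using g unfolding graph_def by (rule conjunct2)
    obtain u v where uv: "u \<noteq> v" "e = {u, v}" using gE eE by blast
    have "e \<subseteq> W" using FW that by blast
    then have uW: "u \<in> W" "v \<in> W" using uv(2) by auto
    have "{u, v} \<in> F" using that uv by simp
    then have disj: "{l u..r u} \<inter> {l v..r v} = {}" using adj uW uv(1) by blast
    have "r u < l v \<or> r v < l u"
    proof (rule ccontr)
      assume "\<not> (r u < l v \<or> r v < l u)"
      then have "max (l u) (l v) \<in> {l u..r u} \<inter> {l v..r v}" using lr uW by auto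
      then show False using disj by blast
    qed
    then show ?thesis
    proof
      assume "r u < l v" then show ?thesis using uv uW by blast
    next
      assume "r v < l u" then show ?thesis using uv uW by (blast intro: insert_commute)
    qed
  qed
  have adjE: "{u, w} \<in> E" if "u \<in> W" "w \<in> W" "r u < l w" for u w
  proof -
    have "u \<noteq> w" using that lr by force
    moreover have "{l u..r u} \<inter> {l w..r w} = {}" using that by auto
    ultimately have "{u, w} \<in> F" using adj that by blast
    then show ?thesis using FE by blast
  qed
  define P where "P = {u \<in> W. \<exists>v\<in>W. r u < l v}"
  define Q where "Q = {v \<in> W. \<exists>u\<in>W. r u < l v}"
  obtain e0 where "e0 \<in> F" using False by blast
  then obtain u0 v0 where uv0: "u0 \<in> W" "v0 \<in> W" "r u0 < l v0" using edge by blast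
  have Pne: "P \<noteq> {}" and Qne: "Q \<noteq> {}" using uv0 unfolding P_def Q_def by blast+
  have finP: "finite P" and finQ: "finite Q" using finW unfolding P_def Q_def by auto
  obtain x where xP: "x \<in> P" and xmin: "\<forall>u\<in>P. r x \<le> r u"
  proof -
    have "Min (r ` P) \<in> r ` P" using finP Pne by simp
    then obtain x where "x \<in> P" "r x = Min (r ` P)" by auto
    moreover have "\<forall>u\<in>P. Min (r ` P) \<le> r u" using finP by simp
    ultimately show ?thesis using that by metis
  qed
  obtain y where yQ: "y \<in> Q" and ymax: "\<forall>v\<in>Q. l v \<le> l y"
  proof -
    have "Max (l ` Q) \<in> l ` Q" using finQ Qne by simp
    then obtain y where "y \<in> Q" "l y = Max (l ` Q)" by auto
    moreover have "\<forall>v\<in>Q. l v \<le> Max (l ` Q)" using finQ by simp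
    ultimately show ?thesis using that by metis
  qed
  have xW: "x \<in> W" and yW: "y \<in> W" using xP yQ unfolding P_def Q_def by auto
  have key1: "r x < l v" if "u \<in> W" "v \<in> W" "r u < l v" for u v
  proof -
    have "u \<in> P" using that unfolding P_def by blast
    then show ?thesis using xmin that by force
  qed
  have key2: "r u < l y" if "u \<in> W" "v \<in> W" "r u < l v" for u v
  proof -
    have "v \<in> Q" using that unfolding Q_def by blast
    then show ?thesis using ymax that by force
  qed
  have xy: "r x < l y" using key1[OF uv0(1) yW key2[OF uv0]] .
  have xney: "x \<noteq> y" using xy lr yW by force
  have xyE: "{x, y} \<in> E" using adjE[OF xW yW xy] .
  have xV: "x \<in> V" and yV: "y \<in> V" using xW yW WV by auto
  define Nx where "Nx = {v \<in> W. r x < l v}"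
  define Ny where "Ny = {u \<in> W. r u < l y}"
  define Cm where "Cm = insert y {w \<in> V. {w, x} \<in> E \<and> {w, y} \<in> E \<and> w \<noteq> x}"
  have Cm_clique: "Kc Cm \<subseteq> E"
  proof
    fix e assume "e \<in> Kc Cm"
    then obtain u w where e: "e = {u, w}" "u \<in> Cm" "w \<in> Cm" "u \<noteq> w" unfolding Kc_def by blast
    show "e \<in> E"
    proof (cases "u = y")
      case True
      then have "{w, y} \<in> E" using e unfolding Cm_def by auto
      then show ?thesis using e True by (simp add: insert_commute)
    next
      case uy: False
      show ?thesis
      proof (cases "w = y")
        case True
        then show ?thesis using e uy unfolding Cm_def by auto
      next
        case wy: False
        have u: "u \<in> V" "{u, x} \<in> E" "{u, y} \<in> E" "u \<noteq> x" using e uy unfolding Cm_def by auto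
        have w: "w \<in> V" "{w, x} \<in> E" "{w, y} \<in> E" "w \<noteq> x" using e wy unfolding Cm_def by auto
        have "{u, w} \<in> E"
          by (rule C4_chord[OF g bg u(1) yV w(1) xV])
            (use u w uy wy e(4) xney in \<open>simp_all add: insert_commute\<close>)
        then show ?thesis using e by simp
      qed
    qed
  qed
  have finNx: "finite Nx" and finNy: "finite Ny" using finW unfolding Nx_def Ny_def by auto
  have finCm: "finite Cm" using finV yV unfolding Cm_def by auto
  have xnot: "x \<notin> Cm \<union> Nx" using xney lr xW unfolding Cm_def Nx_def by force
  have ynot: "y \<notin> {x} \<union> Ny" using xney lr yW unfolding Ny_def by force
  have T1: "threshold (insert x (Cm \<union> Nx)) (Kc Cm \<union> {{x, u} |u. u \<in> Cm \<union> Nx})"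
    by (rule thr_extend[OF thr_clique[OF finCm] finNx xnot]) (simp add: Cm_def)
  have T2: "threshold (insert y ({x} \<union> Ny)) ({} \<union> {{y, u} |u. u \<in> {x} \<union> Ny})"
    by (rule thr_extend[OF threshold.single _ ynot]) (rule finNy)
  have S1: "subgraph (insert x (Cm \<union> Nx)) (Kc Cm \<union> {{x, u} |u. u \<in> Cm \<union> Nx}) V E"
    unfolding subgraph_def
  proof (intro conjI)
    show "insert x (Cm \<union> Nx) \<subseteq> V" using xV yV WV unfolding Cm_def Nx_def by auto
    have "{x, u} \<in> E" if uu: "u \<in> Cm \<union> Nx" for u
    proof -
      consider "u = y" | "u \<in> V" "{u, x} \<in> E" | "u \<in> Nx" using uu unfolding Cm_def by auto
      then show ?thesis
      proof cases
        case 1 then show ?thesis using xyE by simp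
      next
        case 2 then show ?thesis by (simp add: insert_commute)
      next
        case 3 then show ?thesis using adjE xW unfolding Nx_def by blast
      qed
    qed
    then show "Kc Cm \<union> {{x, u} |u. u \<in> Cm \<union> Nx} \<subseteq> E" using Cm_clique by blast
    show "\<forall>e\<in>Kc Cm \<union> {{x, u} |u. u \<in> Cm \<union> Nx}. e \<subseteq> insert x (Cm \<union> Nx)"
      unfolding Kc_def by blast
  qed
  have S2: "subgraph (insert y ({x} \<union> Ny)) ({} \<union> {{y, u} |u. u \<in> {x} \<union> Ny}) V E"
    unfolding subgraph_def
  proof (intro conjI)
    show "insert y ({x} \<union> Ny) \<subseteq> V" using xV yV WV unfolding Ny_def by auto
    have "{y, u} \<in> E" if "u \<in> {x} \<union> Ny" for u
    proof -
      have "{u, y} \<in> E" using that xyE adjE yW unfolding Ny_def by auto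
      then show ?thesis by (simp add: insert_commute)
    qed
    then show "{} \<union> {{y, u} |u. u \<in> {x} \<union> Ny} \<subseteq> E" by blast
    show "\<forall>e\<in>{} \<union> {{y, u} |u. u \<in> {x} \<union> Ny}. e \<subseteq> insert y ({x} \<union> Ny)" by blast
  qed
  have cov: "F \<subseteq> (Kc Cm \<union> {{x, u} |u. u \<in> Cm \<union> Nx}) \<union> ({} \<union> {{y, u} |u. u \<in> {x} \<union> Ny})"
  proof
    fix e assume "e \<in> F"
    then obtain u v where e: "e = {u, v}" "u \<in> W" "v \<in> W" "r u < l v" using edge by blast
    show "e \<in> (Kc Cm \<union> {{x, u} |u. u \<in> Cm \<union> Nx}) \<union> ({} \<union> {{y, u} |u. u \<in> {x} \<union> Ny})"
    proof (cases "u = x")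
      case True
      then have "v \<in> Nx" using e unfolding Nx_def by auto
      then show ?thesis using e True by blast
    next
      case ux: False
      show ?thesis
      proof (cases "v = y")
        case True
        then have "u \<in> Ny" using e unfolding Ny_def by auto
        then show ?thesis using e True by (auto simp: insert_commute)
      next
        case vy: False
        have k1: "r x < l v" and k2: "r u < l y" using key1[OF e(2-4)] key2[OF e(2-4)] by auto
        have uy: "u \<noteq> y" using e(4) ymax lr yW e(3) k2 by force
        have vx: "v \<noteq> x" using k1 lr xW by force
        have uv: "u \<noteq> v" using e(4) lr e(2) by force
        have uV: "u \<in> V" and vV: "v \<in> V" using e WV by auto
        have uvE: "{u, v} \<in> E" using adjE e by blast
        have vxE: "{v, x} \<in> E" using adjE[OF xW e(3) k1] by (simp add: insert_commute)
        have yuE: "{y, u} \<in> E" using adjE[OF e(2) yW k2] by (simp add: insert_commute)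
        have uxE: "{u, x} \<in> E"
          by (rule C4_chord[OF g bg uV vV xV yV uv ux uy vx vy xney uvE vxE xyE yuE])
        have vyE: "{v, y} \<in> E"
          by (rule C4_chord[OF g bg vV xV yV uV vx vy uv[symmetric] xney ux[symmetric] uy[symmetric] vxE xyE yuE])
            (simp add: insert_commute uvE)
        have "u \<in> Cm" using uV uxE yuE ux unfolding Cm_def by (simp add: insert_commute)
        moreover have "v \<in> Cm" using vV vxE vyE vx unfolding Cm_def by (simp add: insert_commute)
        ultimately have "e \<in> Kc Cm" unfolding Kc_def using e(1) uv by blast
        then show ?thesis by blast
      qed
    qed
  qed
  define T where "T = (\<lambda>b. if b then (insert x (Cm \<union> Nx), Kc Cm \<union> {{x, u} |u. u \<in> Cm \<union> Nx})
                        else (insert y ({x} \<union> Ny), {} \<union> {{y, u} |u. u \<in> {x} \<union> Ny}))"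
  show ?thesis by (rule exI[of _ T]) (use T1 T2 S1 S2 cov in \<open>simp add: T_def\<close>)
qed


lemma edge_threshold: "threshold {u, v} {{u, v}}" if "u \<noteq> v" for u v :: 'a
proof -
  have "threshold (insert v {u}) ({} \<union> {{v, w} |w. w \<in> {u}})"
    by (rule threshold.universal[OF threshold.single]) (use that in simp)
  moreover have "{} \<union> {{v, w} |w. w \<in> {u}} = {{u, v}}" by (auto simp: insert_commute)
  moreover have "insert v {u} = {u, v}" by auto
  ultimately show ?thesis by simp
qed

theorem proposition15:
  fixes V :: "'a set" and E :: "'a set set"
  assumes "graph V E" and "block_graph V E"
  shows "cobox V E \<le> cothdim V E \<and> cothdim V E \<le> 2 * cobox V E"
proof -
  note g = assms(1) and bg = assms(2)
  define Pt where "Pt = (\<lambda>k::nat. \<exists>HV HE. (\<forall>i<k. subgraph (HV i) (HE i) V E \<and> threshold (HV i) (HE i))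
                                  \<and> (\<Union>i<k. HE i) = (E :: 'a set set))"
  define Pc where "Pc = (\<lambda>k::nat. \<exists>HV HE. (\<forall>i<k. subgraph (HV i) (HE i) V E \<and> cointerval (HV i) (HE i))
                                  \<and> (\<Union>i<k. HE i) = (E :: 'a set set))"
  have ct: "cothdim V E = (LEAST k. Pt k)" unfolding cothdim_def Pt_def by simp
  have cb: "cobox V E = (LEAST k. Pc k)" unfolding cobox_def Pc_def by simp
  have finE: "finite E" using g by (rule graph_finE)
  have gE: "\<forall>e\<in>E. \<exists>u v. u \<in> V \<and> v \<in> V \<and> u \<noteq> v \<and> e = {u, v}"
    using g unfolding graph_def by (rule conjunct2)
  obtain f where f: "bij_betw f {0..<card E} E" using ex_bij_betw_nat_finite[OF finE] by blast
  have "Pt (card E)"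
    unfolding Pt_def
  proof (intro exI[of _ f] exI[of _ "\<lambda>i. {f i}"] conjI allI impI)
    fix i assume "i < card E"
    then have fi: "f i \<in> E" using f unfolding bij_betw_def by auto
    then obtain u v where uv: "u \<in> V" "v \<in> V" "u \<noteq> v" "f i = {u, v}" using gE by blast
    show "subgraph (f i) {f i} V E" unfolding subgraph_def using fi uv by auto
    show "threshold (f i) {f i}" using edge_threshold[OF uv(3)] uv(4) by simp
  next
    have "(\<Union>i<card E. {f i}) = f ` {0..<card E}" by auto
    then show "(\<Union>i<card E. {f i}) = E" using f unfolding bij_betw_def by simp
  qed
  then have Ptc: "Pt (cothdim V E)" unfolding ct by (rule LeastI)
  have PtPc: "Pc k" if "Pt k" for k
  proof -
    from that obtain HV HE where h: "\<forall>i<k. subgraph (HV i) (HE i) V E \<and> threshold (HV i) (HE i)"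
      "(\<Union>i<k. HE i) = E" unfolding Pt_def by blast
    show ?thesis unfolding Pc_def using h thr_cointerval by blast
  qed
  have Pcc: "Pc (cothdim V E)" using PtPc[OF Ptc] .
  have le1: "cobox V E \<le> cothdim V E" unfolding cb by (rule Least_le[of Pc, OF Pcc])
  have Pcb: "Pc (cobox V E)" unfolding cb using Pcc by (rule LeastI)
  have le2: "cothdim V E \<le> 2 * cobox V E"
  proof (cases "E = {}")
    case True
    have "Pt 0" unfolding Pt_def using True by simp
    then have "cothdim V E \<le> 0" unfolding ct by (rule Least_le)
    then show ?thesis by simp
  next
    case False
    then obtain e where "e \<in> E" by blast
    then obtain w0 where w0: "w0 \<in> V" using gE by blast
    define k where "k = cobox V E"
    from Pcb obtain HV HE where h: "\<forall>i<k. subgraph (HV i) (HE i) V E \<and> cointerval (HV i) (HE i)"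
      "(\<Union>i<k. HE i) = E" unfolding Pc_def k_def by blast
    have "\<forall>i. \<exists>T :: bool \<Rightarrow> 'a set \<times> 'a set set. i < k \<longrightarrow>
           (\<forall>b. subgraph (fst (T b)) (snd (T b)) V E \<and> threshold (fst (T b)) (snd (T b)))
           \<and> HE i \<subseteq> snd (T True) \<union> snd (T False)"
    proof
      fix i
      show "\<exists>T :: bool \<Rightarrow> 'a set \<times> 'a set set. i < k \<longrightarrow>
           (\<forall>b. subgraph (fst (T b)) (snd (T b)) V E \<and> threshold (fst (T b)) (snd (T b)))
           \<and> HE i \<subseteq> snd (T True) \<union> snd (T False)"
      proof (cases "i < k")
        case True
        then have "subgraph (HV i) (HE i) V E" "cointerval (HV i) (HE i)" using h(1) by auto
        from cover2[OF g bg this w0] show ?thesis by blast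
      qed simp
    qed
    then obtain Tf where Tf: "\<And>i. i < k \<Longrightarrow>
           (\<forall>b. subgraph (fst (Tf i b)) (snd (Tf i b)) V E \<and> threshold (fst (Tf i b)) (snd (Tf i b)))
           \<and> HE i \<subseteq> snd (Tf i True) \<union> snd (Tf i False)"
      by (metis choice)
    define HV' where "HV' = (\<lambda>j. fst (Tf (j div 2) (even j)))"
    define HE' where "HE' = (\<lambda>j. snd (Tf (j div 2) (even j)))"
    have "Pt (2 * k)"
      unfolding Pt_def
    proof (rule exI[of _ HV'], rule exI[of _ HE'], rule conjI, intro allI impI)
      fix j assume "j < 2 * k"
      then have "j div 2 < k" by auto
      then show "subgraph (HV' j) (HE' j) V E \<and> threshold (HV' j) (HE' j)"
        unfolding HV'_def HE'_def using Tf by blast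
    next
      show "(\<Union>j<2 * k. HE' j) = E"
      proof
        show "(\<Union>j<2 * k. HE' j) \<subseteq> E"
        proof
          fix e assume "e \<in> (\<Union>j<2 * k. HE' j)"
          then obtain j where j: "j < 2 * k" "e \<in> HE' j" by blast
          then have "j div 2 < k" by auto
          then have "subgraph (HV' j) (HE' j) V E" unfolding HV'_def HE'_def using Tf by blast
          then show "e \<in> E" using j unfolding subgraph_def by blast
        qed
        show "E \<subseteq> (\<Union>j<2 * k. HE' j)"
        proof
          fix e assume "e \<in> E"
          then obtain i where i: "i < k" "e \<in> HE i" using h(2) by blast
          then have "e \<in> snd (Tf i True) \<union> snd (Tf i False)" using Tf by blast
          moreover have "HE' (2 * i) = snd (Tf i True)" "HE' (2 * i + 1) = snd (Tf i False)"
            unfolding HE'_def by auto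
          moreover have "2 * i < 2 * k" "2 * i + 1 < 2 * k" using i by auto
          ultimately show "e \<in> (\<Union>j<2 * k. HE' j)" by (metis UN_iff Un_iff lessThan_iff)
        qed
      qed
    qed
    then have "cothdim V E \<le> 2 * k" unfolding ct by (rule Least_le)
    then show ?thesis unfolding k_def .
  qed
  show ?thesis using le1 le2 by simp
qed

end
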